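(* Let $m\ge 2$ be an integer and let $H$ be a finite, simple, connected graph of order at least $2$. The Cartesian product $K_m \,\square\, H$ is well-dominated if and only if either $m \neq 3$ and $H$ is isomorphic to $K_m$, or $m=3$ and $H$ is isomorphic to $K_3$ or to the path $P_3$ on three vertices.
   Context: A set $D$ of vertices of a graph is dominating if every vertex is in $D$ or adjacent to a vertex of $D$. A graph is well-dominated if every minimal (with respect to inclusion) dominating set is a minimum dominating set. The Cartesian product $G\,\square\, H$ has vertex set $V(G)\times V(H)$, with $(g_1,h_1)$ adjacent to $(g_2,h_2)$ iff either ($g_1=g_2$ and $h_1h_2\in E(H)$) or ($h_1=h_2$ and $g_1g_2\in E(G)$). *)

theory Defs
  imports Main
begin

type_synonym 'a graph = "'a set \<times> ('a \<Rightarrow> 'a \<Rightarrow> bool)"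

definition verts :: "'a graph \<Rightarrow> 'a set" where "verts G = fst G"
definition adj :: "'a graph \<Rightarrow> 'a \<Rightarrow> 'a \<Rightarrow> bool" where "adj G = snd G"

definition fin_simple_graph :: "'a graph \<Rightarrow> bool" where
  "fin_simple_graph G \<longleftrightarrow> finite (verts G) \<and>
     (\<forall>x y. adj G x y \<longrightarrow> x \<in> verts G \<and> y \<in> verts G \<and> x \<noteq> y \<and> adj G y x)"

definition connected_graph :: "'a graph \<Rightarrow> bool" where
  "connected_graph G \<longleftrightarrow> verts G \<noteq> {} \<and>
     (\<forall>x\<in>verts G. \<forall>y\<in>verts G. (adj G)\<^sup>*\<^sup>* x y)"

definition graph_iso :: "'a graph \<Rightarrow> 'b graph \<Rightarrow> bool" where
  "graph_iso G H \<longleftrightarrow> (\<exists>f. bij_betw f (verts G) (verts H) \<and>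
     (\<forall>x\<in>verts G. \<forall>y\<in>verts G. adj G x y \<longleftrightarrow> adj H (f x) (f y)))"

definition complete_graph :: "nat \<Rightarrow> nat graph" where
  "complete_graph m = ({0..<m}, \<lambda>x y. x < m \<and> y < m \<and> x \<noteq> y)"

definition path_graph :: "nat \<Rightarrow> nat graph" where
  "path_graph n = ({0..<n}, \<lambda>x y. x < n \<and> y < n \<and> (x = y + 1 \<or> y = x + 1))"

definition cart_prod :: "'a graph \<Rightarrow> 'b graph \<Rightarrow> ('a \<times> 'b) graph" where
  "cart_prod G H = (verts G \<times> verts H,
     \<lambda>(g1, h1) (g2, h2). (g1 = g2 \<and> g1 \<in> verts G \<and> adj H h1 h2) \<or>
                         (h1 = h2 \<and> h1 \<in> verts H \<and> adj G g1 g2))"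

definition dominating :: "'a graph \<Rightarrow> 'a set \<Rightarrow> bool" where
  "dominating G D \<longleftrightarrow> D \<subseteq> verts G \<and>
     (\<forall>v\<in>verts G. v \<in> D \<or> (\<exists>u\<in>D. adj G v u))"

definition minimal_dominating :: "'a graph \<Rightarrow> 'a set \<Rightarrow> bool" where
  "minimal_dominating G D \<longleftrightarrow> dominating G D \<and> (\<forall>D'. D' \<subset> D \<longrightarrow> \<not> dominating G D')"

definition minimum_dominating :: "'a graph \<Rightarrow> 'a set \<Rightarrow> bool" where
  "minimum_dominating G D \<longleftrightarrow> dominating G D \<and> (\<forall>D'. dominating G D' \<longrightarrow> card D \<le> card D')"

definition well_dominated :: "'a graph \<Rightarrow> bool" where
  "well_dominated G \<longleftrightarrow> (\<forall>D. minimal_dominating G D \<longrightarrow> minimum_dominating G D)"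

end

theory Submission
  imports Defs
begin


lemma verts_cp: "verts (cart_prod G H) = verts G \<times> verts H"
  by (simp add: cart_prod_def verts_def)

lemma adj_cp: "adj (cart_prod G H) (g1,h1) (g2,h2) \<longleftrightarrow>
   (g1 = g2 \<and> g1 \<in> verts G \<and> adj H h1 h2) \<or> (h1 = h2 \<and> h1 \<in> verts H \<and> adj G g1 g2)"
  by (simp add: cart_prod_def adj_def)

lemma verts_K: "verts (complete_graph m) = {0..<m}"
  by (simp add: complete_graph_def verts_def)
lemma adj_K: "adj (complete_graph m) x y \<longleftrightarrow> x < m \<and> y < m \<and> x \<noteq> y"
  by (simp add: complete_graph_def adj_def)
lemma verts_P: "verts (path_graph n) = {0..<n}"
  by (simp add: path_graph_def verts_def)
lemma adj_P: "adj (path_graph n) x y \<longleftrightarrow> x < n \<and> y < n \<and> (x = y + 1 \<or> y = x + 1)"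
  by (simp add: path_graph_def adj_def)

lemma exists_minimal:
  assumes fin: "finite (verts G)" and d: "dominating G D0"
  shows "\<exists>D \<subseteq> D0. minimal_dominating G D"
proof -
  define P where "P k \<longleftrightarrow> (\<exists>D \<subseteq> D0. dominating G D \<and> card D = k)" for k
  have "P (card D0)" using d by (auto simp: P_def)
  then have ex: "P (LEAST k. P k)" by (rule LeastI)
  then obtain D where D: "D \<subseteq> D0" "dominating G D" "card D = (LEAST k. P k)" by (auto simp: P_def)
  have finD0: "finite D0" using d fin by (auto simp: dominating_def intro: finite_subset)
  have "minimal_dominating G D"
    unfolding minimal_dominating_def
  proof (intro conjI allI impI notI)
    show "dominating G D" by fact
  next
    fix D' assume "D' \<subset> D" "dominating G D'"
    then have "card D' < card D" using finD0 D(1) by (meson psubset_card_mono rev_finite_subset)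
    moreover have "D' \<subseteq> D0" using \<open>D' \<subset> D\<close> D(1) by blast
    then have "P (card D')" using \<open>dominating G D'\<close> unfolding P_def by blast
    then have "(LEAST k. P k) \<le> card D'" by (rule Least_le)
    ultimately show False using D(3) by simp
  qed
  then show ?thesis using D(1) by blast
qed

lemma forced:
  assumes "dominating G D" "D \<subseteq> D0" "w \<in> verts G"
    and "\<And>u. u \<in> D0 \<Longrightarrow> u = w \<or> adj G w u \<Longrightarrow> u = v"
  shows "v \<in> D"
  using assms unfolding dominating_def by blast

lemma wd_upper:
  assumes wd: "well_dominated G" and fin: "finite (verts G)"
    and L: "minimal_dominating G L" and d: "dominating G D0" and F: "F \<subseteq> D0"
    and wit: "\<And>v. v \<in> F \<Longrightarrow> \<exists>w\<in>verts G. \<forall>u\<in>D0. (u = w \<or> adj G w u) \<longrightarrow> u = v"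
  shows "card F \<le> card L"
proof -
  obtain D where D: "D \<subseteq> D0" "minimal_dominating G D" using exists_minimal[OF fin d] by blast
  have dD: "dominating G D" using D(2) by (simp add: minimal_dominating_def)
  have "F \<subseteq> D"
  proof
    fix v assume "v \<in> F"
    then obtain w where "w \<in> verts G" "\<forall>u\<in>D0. (u = w \<or> adj G w u) \<longrightarrow> u = v" using wit by blast
    then show "v \<in> D" using forced[OF dD D(1)] by blast
  qed
  moreover have "finite D" using dD fin by (auto simp: dominating_def intro: finite_subset)
  ultimately have "card F \<le> card D" by (simp add: card_mono)
  also have "card D \<le> card L"
    using wd D(2) L unfolding well_dominated_def minimum_dominating_def minimal_dominating_def by blast
  finally show ?thesis .
qed

lemma wd_lower:
  assumes wd: "well_dominated G" and L: "minimal_dominating G L" and d: "dominating G D0"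
  shows "card L \<le> card D0"
  using wd L d unfolding well_dominated_def minimum_dominating_def by blast


locale kh =
  fixes m :: nat and H :: "'a graph"
  assumes m2: "2 \<le> m" and fsg: "fin_simple_graph H" and conn: "connected_graph H"
    and n2: "2 \<le> card (verts H)"
begin

abbreviation "V \<equiv> verts H"
abbreviation "G \<equiv> cart_prod (complete_graph m) H"
definition N where "N x = {y. adj H x y}"
definition NC where "NC x = insert x (N x)"

lemma finV: "finite V" using fsg by (simp add: fin_simple_graph_def)
lemma adjV: "adj H x y \<Longrightarrow> x \<in> V \<and> y \<in> V \<and> x \<noteq> y \<and> adj H y x"
  using fsg by (simp add: fin_simple_graph_def)
lemma adj_sym: "adj H x y \<longleftrightarrow> adj H y x" using adjV by blast
lemma N_sub: "N x \<subseteq> V" using adjV by (auto simp: N_def)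
lemma finN: "finite (N x)" using N_sub finV by (rule finite_subset)
lemma notinN: "x \<notin> N x" using adjV by (auto simp: N_def)
lemma inN: "y \<in> N x \<longleftrightarrow> adj H x y" by (simp add: N_def)
lemma vG: "verts G = {0..<m} \<times> V" by (simp add: verts_cp verts_K)
lemma aG: "adj G (i,h) (j,k) \<longleftrightarrow> (i = j \<and> i < m \<and> adj H h k) \<or> (h = k \<and> h \<in> V \<and> i < m \<and> j < m \<and> i \<noteq> j)"
  by (auto simp: adj_cp adj_K verts_K)
lemma finG: "finite (verts G)" using finV by (simp add: vG)

definition "L = {0::nat} \<times> V"

lemma L_dom: "dominating G L"
  unfolding dominating_def
proof (intro conjI ballI)
  show "L \<subseteq> verts G" using m2 by (auto simp: L_def vG)
next
  fix v assume "v \<in> verts G"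
  then obtain i h where v: "v = (i,h)" "i < m" "h \<in> V" by (auto simp: vG)
  show "v \<in> L \<or> (\<exists>u\<in>L. adj G v u)"
  proof (cases "i = 0")
    case True then show ?thesis using v by (simp add: L_def)
  next
    case False
    then have "adj G v (0,h)" using v m2 by (simp add: aG)
    moreover have "(0,h) \<in> L" using v by (simp add: L_def)
    ultimately show ?thesis by blast
  qed
qed

lemma L_min: "minimal_dominating G L"
  unfolding minimal_dominating_def
proof (intro conjI allI impI notI)
  show "dominating G L" by (rule L_dom)
next
  fix D' assume "D' \<subset> L" "dominating G D'"
  then obtain h where h: "(0,h) \<in> L" "(0,h) \<notin> D'" by (auto simp: L_def)
  then have hV: "h \<in> V" by (simp add: L_def)
  have "(0,h) \<in> D'"
  proof (rule forced[OF \<open>dominating G D'\<close>, of L "(1,h)"])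
    show "D' \<subseteq> L" using \<open>D' \<subset> L\<close> by blast
    show "(1, h) \<in> verts G" using hV m2 by (simp add: vG)
    fix u assume "u \<in> L" "u = (1, h) \<or> adj G (1, h) u"
    then show "u = (0, h)" by (auto simp: L_def aG)
  qed
  then show False using h by blast
qed

lemma card_L: "card L = card V" by (simp add: L_def card_cartesian_product)

lemma closure:
  assumes "b \<in> V" "b \<in> X" "\<And>x y. x \<in> X \<Longrightarrow> adj H x y \<Longrightarrow> y \<in> X"
  shows "V \<subseteq> X"
proof
  fix c assume "c \<in> V"
  then have "(adj H)\<^sup>*\<^sup>* b c" using conn assms(1) by (simp add: connected_graph_def)
  then show "c \<in> X"
  proof (induction rule: rtranclp_induct)
    case base show ?case using assms(2) .
  next
    case (step y z) show ?case using assms(3)[OF step.IH step.hyps(2)] .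
  qed
qed

lemma has_nb:
  assumes "x \<in> V" shows "N x \<noteq> {}"
proof
  assume e: "N x = {}"
  have "V \<subseteq> {x}" by (rule closure[OF assms]) (use e in \<open>auto simp: N_def\<close>)
  then have "card V \<le> card {x}" by (intro card_mono) auto
  then have "card V \<le> 1" by simp
  then show False using n2 by simp
qed

end

locale kh_wd = kh +
  assumes wd: "well_dominated G"
begin

lemma upper:
  assumes "dominating G D0" "F \<subseteq> D0"
    and "\<And>v. v \<in> F \<Longrightarrow> \<exists>w\<in>verts G. \<forall>u\<in>D0. (u = w \<or> adj G w u) \<longrightarrow> u = v"
  shows "card F \<le> card V"
  using wd_upper[OF wd finG L_min assms] card_L by simp

lemma lower: "dominating G D0 \<Longrightarrow> card V \<le> card D0"
  using wd_lower[OF wd L_min] card_L by simp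

end



context kh begin
definition W where "W b = V - NC b"
definition A where "A b = {x \<in> N b. N x \<subseteq> NC b}"

lemma NC_sub: "b \<in> V \<Longrightarrow> NC b \<subseteq> V" using N_sub by (auto simp: NC_def)
lemma card_NC: "card (NC b) = Suc (card (N b))" using finN notinN by (simp add: NC_def)
lemma card_W: assumes "b \<in> V" shows "card (W b) = card V - Suc (card (N b))"
proof -
  have "finite (NC b)" using NC_sub[OF assms] finV by (rule finite_subset)
  then have "card (V - NC b) = card V - card (NC b)" using NC_sub[OF assms] by (rule card_Diff_subset)
  then show ?thesis using card_NC by (simp add: W_def)
qed
lemma card_W': "b \<in> V \<Longrightarrow> card (W b) + Suc (card (N b)) = card V"
proof -
  assume b: "b \<in> V"
  have "card (NC b) \<le> card V" using NC_sub[OF b] finV by (simp add: card_mono)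
  then show ?thesis using card_W[OF b] card_NC by simp
qed
lemma W_iff: "x \<in> W b \<longleftrightarrow> x \<in> V \<and> x \<noteq> b \<and> \<not> adj H b x" by (auto simp: W_def NC_def N_def)
end

context kh_wd begin

lemma min_le: "minimal_dominating G D \<Longrightarrow> card D \<le> card V"
  using wd L_min card_L unfolding well_dominated_def minimum_dominating_def minimal_dominating_def by metis

lemma n_ge_m: "m \<le> card V"
proof -
  obtain h0 where h0: "h0 \<in> V" using n2 by (metis all_not_in_conv card.empty not_numeral_le_zero)
  define D0 where "D0 = {0..<m} \<times> (V - {h0})"
  have d: "dominating G D0"
    unfolding dominating_def
  proof (intro conjI ballI)
    show "D0 \<subseteq> verts G" by (auto simp: D0_def vG)
  next
    fix v assume "v \<in> verts G"
    then obtain i h where v: "v = (i,h)" "i < m" "h \<in> V" by (auto simp: vG)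
    show "v \<in> D0 \<or> (\<exists>u\<in>D0. adj G v u)"
    proof (cases "h = h0")
      case False then show ?thesis using v by (simp add: D0_def)
    next
      case True
      obtain a where a: "a \<in> N h0" using has_nb[OF h0] by blast
      then have "adj G v (i,a)" using v True by (simp add: aG inN)
      moreover have "(i,a) \<in> D0" using a v adjV[of h0 a] by (auto simp: D0_def inN)
      ultimately show ?thesis by blast
    qed
  qed
  obtain D where D: "D \<subseteq> D0" "minimal_dominating G D" using exists_minimal[OF finG d] by blast
  have dD: "dominating G D" using D(2) by (simp add: minimal_dominating_def)
  have "{0..<m} \<subseteq> fst ` D"
  proof
    fix i assume "i \<in> {0..<m}"
    then have vi: "(i,h0) \<in> verts G" using h0 by (simp add: vG)
    have "(i,h0) \<notin> D" using D(1) by (auto simp: D0_def)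
    then obtain u where u: "u \<in> D" "adj G (i,h0) u" using dD vi unfolding dominating_def by blast
    obtain j k where jk: "u = (j,k)" by (cases u)
    have "k \<noteq> h0" using u(1) D(1) jk by (auto simp: D0_def)
    then have "j = i" using u(2) jk by (simp add: aG)
    then show "i \<in> fst ` D" using u(1) jk by force
  qed
  have finD: "finite D" using dD finG by (auto simp: dominating_def intro: finite_subset)
  have "m = card {0..<m}" by simp
  also have "\<dots> \<le> card (fst ` D)" using \<open>{0..<m} \<subseteq> fst ` D\<close> finD by (intro card_mono) auto
  also have "\<dots> \<le> card D" using finD by (rule card_image_le)
  also have "\<dots> \<le> card V" using min_le[OF D(2)] .
  finally show ?thesis .
qed

lemma deg_lt: assumes b: "b \<in> V" shows "card (N b) < m"
proof (rule ccontr)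
  assume "\<not> card (N b) < m"
  then have ge: "m \<le> card (N b)" by simp
  define D0 where "D0 = {0..<m} \<times> {b} \<union> {0} \<times> W b"
  have d: "dominating G D0"
    unfolding dominating_def
  proof (intro conjI ballI)
    show "D0 \<subseteq> verts G" using b m2 by (auto simp: D0_def vG W_def)
  next
    fix v assume "v \<in> verts G"
    then obtain i h where v: "v = (i,h)" "i < m" "h \<in> V" by (auto simp: vG)
    show "v \<in> D0 \<or> (\<exists>u\<in>D0. adj G v u)"
    proof (cases "h = b")
      case True then show ?thesis using v by (simp add: D0_def)
    next
      case False
      show ?thesis
      proof (cases "adj H b h")
        case True
        then have "adj G v (i,b)" using v by (simp add: aG adj_sym)
        moreover have "(i,b) \<in> D0" using v by (simp add: D0_def)
        ultimately show ?thesis by blast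
      next
        case nadj: False
        then have hW: "h \<in> W b" using False v by (simp add: W_iff)
        show ?thesis
        proof (cases "i = 0")
          case True then show ?thesis using v hW by (simp add: D0_def)
        next
          case False
          then have "adj G v (0,h)" using v m2 by (simp add: aG)
          moreover have "(0,h) \<in> D0" using hW by (simp add: D0_def)
          ultimately show ?thesis by blast
        qed
      qed
    qed
  qed
  have "card D0 \<le> card ({0..<m} \<times> {b}) + card ({0::nat} \<times> W b)"
    unfolding D0_def by (rule card_Un_le)
  also have "\<dots> = m + card (W b)" by (simp add: card_cartesian_product)
  finally have "card D0 \<le> m + card (W b)" .
  moreover have "card V \<le> card D0" using lower[OF d] .
  moreover have "card (W b) + Suc (card (N b)) = card V" using card_W'[OF b] .
  ultimately show False using ge by linarith
qed

end


context kh_wd begin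

lemma bZ:
  assumes b: "b \<in> V" and Z: "Z \<subseteq> A b" and ind: "\<And>z z'. z \<in> Z \<Longrightarrow> z' \<in> Z \<Longrightarrow> \<not> adj H z z'"
    and cov: "\<And>x. x \<in> N b \<Longrightarrow> x \<notin> Z \<Longrightarrow> \<exists>y. adj H x y \<and> y \<in> W b \<union> Z"
    and x0: "x0 \<in> N b" "x0 \<notin> Z"
  shows "card (N b) + 2 = m + card Z"
proof -
  define D0 where "D0 = {1..<m} \<times> {b} \<union> {0} \<times> (W b \<union> Z)"
  have ZN: "Z \<subseteq> N b" using Z by (auto simp: A_def)
  have WZ: "W b \<inter> Z = {}" using ZN by (auto simp: W_iff inN)
  have d: "dominating G D0"
    unfolding dominating_def
  proof (intro conjI ballI)
    show "D0 \<subseteq> verts G" using b m2 ZN N_sub by (auto simp: D0_def vG W_def)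
  next
    fix v assume "v \<in> verts G"
    then obtain i h where v: "v = (i,h)" "i < m" "h \<in> V" by (auto simp: vG)
    show "v \<in> D0 \<or> (\<exists>u\<in>D0. adj G v u)"
    proof (cases "h = b")
      case hb: True
      show ?thesis
      proof (cases "i = 0")
        case True
        then have "adj G v (1,b)" using v m2 hb by (simp add: aG)
        moreover have "(1,b) \<in> D0" using m2 by (simp add: D0_def)
        ultimately show ?thesis by blast
      next
        case False then show ?thesis using v hb by (simp add: D0_def)
      qed
    next
      case False
      show ?thesis
      proof (cases "adj H b h")
        case True
        show ?thesis
        proof (cases "i = 0")
          case i0: True
          show ?thesis
          proof (cases "h \<in> Z")
            case True then show ?thesis using v i0 by (simp add: D0_def)
          next
            case hZ: False
            obtain y where y: "adj H h y" "y \<in> W b \<union> Z" using cov[of h] hZ True by (auto simp: inN)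
            then have "adj G v (0,y)" using v i0 m2 by (simp add: aG)
            moreover have "(0,y) \<in> D0" using y by (simp add: D0_def)
            ultimately show ?thesis by blast
          qed
        next
          case False
          then have "adj G v (i,b)" using v True by (simp add: aG adj_sym)
          moreover have "(i,b) \<in> D0" using v False by (simp add: D0_def)
          ultimately show ?thesis by blast
        qed
      next
        case nadj: False
        then have hW: "h \<in> W b" using False v by (simp add: W_iff)
        show ?thesis
        proof (cases "i = 0")
          case True then show ?thesis using v hW by (simp add: D0_def)
        next
          case False
          then have "adj G v (0,h)" using v m2 by (simp add: aG)
          moreover have "(0,h) \<in> D0" using hW by (simp add: D0_def)
          ultimately show ?thesis by blast
        qed
      qed
    qed
  qed
  have wit: "\<exists>w\<in>verts G. \<forall>u\<in>D0. (u = w \<or> adj G w u) \<longrightarrow> u = v" if v: "v \<in> D0" for v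
  proof -
    consider (B) i where "v = (i,b)" "1 \<le> i" "i < m" | (W) y where "v = (0,y)" "y \<in> W b"
      | (Z) z where "v = (0,z)" "z \<in> Z"
      using v by (auto simp: D0_def)
    then show ?thesis
    proof cases
      case B
      have x0b: "x0 \<noteq> b" "x0 \<notin> W b" "x0 \<in> V" using x0 notinN N_sub[of b] by (auto simp: W_iff inN)
      show ?thesis
      proof (intro bexI[of _ "(i,x0)"] ballI impI)
        show "(i,x0) \<in> verts G" using B x0b by (simp add: vG)
        fix u assume "u \<in> D0" "u = (i, x0) \<or> adj G (i, x0) u"
        then show "u = v" using B x0b x0 by (auto simp: D0_def aG)
      qed
    next
      case W
      have yb: "y \<noteq> b" "\<not> adj H y b" "y \<in> V" using W by (auto simp: W_iff adj_sym)
      show ?thesis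
      proof (intro bexI[of _ "(1,y)"] ballI impI)
        show "(1,y) \<in> verts G" using m2 yb by (simp add: vG)
        fix u assume "u \<in> D0" "u = (1, y) \<or> adj G (1, y) u"
        then show "u = v" using W yb by (auto simp: D0_def aG)
      qed
    next
      case Zc: Z
      have zb: "z \<noteq> b" "z \<in> V" "\<And>y. y \<in> W b \<Longrightarrow> \<not> adj H z y"
        using Zc Z ZN notinN N_sub[of b] by (auto simp: A_def W_def NC_def N_def)
      have zz: "\<And>y. y \<in> Z \<Longrightarrow> \<not> adj H z y" using ind Zc by blast
      show ?thesis
      proof (intro bexI[of _ "(0,z)"] ballI impI)
        show "(0,z) \<in> verts G" using m2 zb by (simp add: vG)
        fix u assume "u \<in> D0" "u = (0, z) \<or> adj G (0, z) u"
        then show "u = v" using Zc zb zz by (auto simp: D0_def aG)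
      qed
    qed
  qed
  have c1: "card D0 \<le> card V" using upper[OF d subset_refl wit] by blast
  have c2: "card V \<le> card D0" using lower[OF d] .
  have finWZ: "finite (W b \<union> Z)" using finV ZN N_sub by (auto simp: W_def intro: finite_subset)
  have "card D0 = card ({1..<m} \<times> {b}) + card ({0::nat} \<times> (W b \<union> Z))"
    unfolding D0_def by (rule card_Un_disjoint) (use finWZ in auto)
  also have "\<dots> = (m - 1) + (card (W b) + card Z)"
    using WZ finWZ by (simp add: card_cartesian_product card_Un_disjoint)
  finally have "card D0 = (m - 1) + (card (W b) + card Z)" .
  then show ?thesis using c1 c2 card_W'[OF b] m2 by linarith
qed

end


context kh_wd begin

lemma edge:
  assumes ab: "adj H a b"
    and Ia: "Ia \<subseteq> {0..<m}" and Ib: "Ib \<subseteq> {0..<m}"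
    and wa: "\<And>i. i \<in> Ia \<Longrightarrow> \<exists>x. adj H a x \<and> x \<notin> NC b \<and> (i = 0 \<longrightarrow> (\<forall>y. adj H x y \<longrightarrow> y \<in> NC a \<union> NC b))"
    and wb: "\<And>i. i \<in> Ib \<Longrightarrow> \<exists>x. adj H b x \<and> x \<notin> NC a \<and> (i = 0 \<longrightarrow> (\<forall>y. adj H x y \<longrightarrow> y \<in> NC a \<union> NC b))"
  shows "card (V - (NC a \<union> NC b)) + card Ia + card Ib \<le> card V"
proof -
  define WW where "WW = V - (NC a \<union> NC b)"
  define D0 where "D0 = {0..<m} \<times> {a,b} \<union> {0} \<times> WW"
  define F where "F = Ia \<times> {a} \<union> Ib \<times> {b} \<union> {0} \<times> WW"
  have abV: "a \<in> V" "b \<in> V" "a \<noteq> b" using adjV[OF ab] by auto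
  have WW_iff: "y \<in> WW \<longleftrightarrow> y \<in> V \<and> y \<noteq> a \<and> y \<noteq> b \<and> \<not> adj H a y \<and> \<not> adj H b y" for y
    by (auto simp: WW_def NC_def N_def)
  have d: "dominating G D0"
    unfolding dominating_def
  proof (intro conjI ballI)
    show "D0 \<subseteq> verts G" using abV m2 by (auto simp: D0_def vG WW_def)
  next
    fix v assume "v \<in> verts G"
    then obtain i h where v: "v = (i,h)" "i < m" "h \<in> V" by (auto simp: vG)
    show "v \<in> D0 \<or> (\<exists>u\<in>D0. adj G v u)"
    proof (cases "h = a \<or> h = b")
      case True then show ?thesis using v by (auto simp: D0_def)
    next
      case nab: False
      show ?thesis
      proof (cases "adj H a h")
        case True
        then have "adj G v (i,a)" using v by (simp add: aG adj_sym)
        moreover have "(i,a) \<in> D0" using v by (simp add: D0_def)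
        ultimately show ?thesis by blast
      next
        case na: False
        show ?thesis
        proof (cases "adj H b h")
          case True
          then have "adj G v (i,b)" using v by (simp add: aG adj_sym)
          moreover have "(i,b) \<in> D0" using v by (simp add: D0_def)
          ultimately show ?thesis by blast
        next
          case False
          then have hW: "h \<in> WW" using nab na v by (simp add: WW_iff)
          show ?thesis
          proof (cases "i = 0")
            case True then show ?thesis using v hW by (simp add: D0_def)
          next
            case False
            then have "adj G v (0,h)" using v m2 by (simp add: aG)
            moreover have "(0,h) \<in> D0" using hW by (simp add: D0_def)
            ultimately show ?thesis by blast
          qed
        qed
      qed
    qed
  qed
  have FD: "F \<subseteq> D0" using Ia Ib by (auto simp: F_def D0_def)
  have wit: "\<exists>w\<in>verts G. \<forall>u\<in>D0. (u = w \<or> adj G w u) \<longrightarrow> u = v" if v: "v \<in> F" for v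
  proof -
    consider (A) i where "v = (i,a)" "i \<in> Ia" | (B) i where "v = (i,b)" "i \<in> Ib"
      | (W) y where "v = (0,y)" "y \<in> WW"
      using v by (auto simp: F_def)
    then show ?thesis
    proof cases
      case A
      obtain x where x: "adj H a x" "x \<notin> NC b" "i = 0 \<longrightarrow> (\<forall>y. adj H x y \<longrightarrow> y \<in> NC a \<union> NC b)"
        using wa[OF A(2)] by blast
      have xx: "x \<noteq> a" "x \<noteq> b" "\<not> adj H x b" "x \<in> V" "x \<notin> WW" "i < m"
        using x adjV[OF x(1)] A Ia by (auto simp: NC_def N_def WW_iff adj_sym)
      have xy: "i = 0 \<Longrightarrow> y \<in> WW \<Longrightarrow> \<not> adj H x y" for y using x(3) by (auto simp: WW_def)
      show ?thesis
      proof (intro bexI[of _ "(i,x)"] ballI impI)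
        show "(i,x) \<in> verts G" using xx by (simp add: vG)
        fix u assume "u \<in> D0" "u = (i, x) \<or> adj G (i, x) u"
        then show "u = v" using A xx xy by (auto simp: D0_def aG)
      qed
    next
      case B
      obtain x where x: "adj H b x" "x \<notin> NC a" "i = 0 \<longrightarrow> (\<forall>y. adj H x y \<longrightarrow> y \<in> NC a \<union> NC b)"
        using wb[OF B(2)] by blast
      have xx: "x \<noteq> a" "x \<noteq> b" "\<not> adj H x a" "x \<in> V" "x \<notin> WW" "i < m"
        using x adjV[OF x(1)] B Ib by (auto simp: NC_def N_def WW_iff adj_sym)
      have xy: "i = 0 \<Longrightarrow> y \<in> WW \<Longrightarrow> \<not> adj H x y" for y using x(3) by (auto simp: WW_def)
      show ?thesis
      proof (intro bexI[of _ "(i,x)"] ballI impI)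
        show "(i,x) \<in> verts G" using xx by (simp add: vG)
        fix u assume "u \<in> D0" "u = (i, x) \<or> adj G (i, x) u"
        then show "u = v" using B xx xy by (auto simp: D0_def aG)
      qed
    next
      case W
      have yb: "y \<noteq> a" "y \<noteq> b" "\<not> adj H y a" "\<not> adj H y b" "y \<in> V" using W by (auto simp: WW_iff adj_sym)
      show ?thesis
      proof (intro bexI[of _ "(1,y)"] ballI impI)
        show "(1,y) \<in> verts G" using m2 yb by (simp add: vG)
        fix u assume "u \<in> D0" "u = (1, y) \<or> adj G (1, y) u"
        then show "u = v" using W yb by (auto simp: D0_def aG)
      qed
    qed
  qed
  have c1: "card F \<le> card V" using upper[OF d FD wit] by blast
  have finWW: "finite WW" using finV by (simp add: WW_def)
  have finI: "finite Ia" "finite Ib" using Ia Ib by (auto intro: finite_subset)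
  have "card F = card (Ia \<times> {a} \<union> Ib \<times> {b}) + card ({0::nat} \<times> WW)"
    unfolding F_def by (rule card_Un_disjoint) (use finWW finI WW_iff in auto)
  also have "card (Ia \<times> {a} \<union> Ib \<times> {b}) = card (Ia \<times> {a}) + card (Ib \<times> {b})"
    by (rule card_Un_disjoint) (use finI abV in auto)
  finally have "card F = card Ia + card Ib + card WW" by (simp add: card_cartesian_product)
  then show ?thesis using c1 by (simp add: WW_def)
qed

end


context kh_wd begin

definition indep where "indep Z \<longleftrightarrow> (\<forall>z\<in>Z. \<forall>z'\<in>Z. \<not> adj H z z')"

lemma A_sub: "A b \<subseteq> N b" by (auto simp: A_def)

lemma maxZ: "\<exists>Z. Z \<subseteq> A b \<and> indep Z \<and> (\<forall>Z'. Z' \<subseteq> A b \<and> indep Z' \<longrightarrow> card Z' \<le> card Z)"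
proof -
  define P where "P k \<longleftrightarrow> (\<exists>Z. Z \<subseteq> A b \<and> indep Z \<and> card Z = k)" for k
  have "P 0" unfolding P_def by (intro exI[of _ "{}"]) (auto simp: indep_def)
  moreover have "\<forall>k. P k \<longrightarrow> k \<le> card V"
  proof (intro allI impI)
    fix k assume "P k"
    then obtain Z where "Z \<subseteq> A b" "card Z = k" by (auto simp: P_def)
    then have "Z \<subseteq> V" using A_sub N_sub by blast
    then show "k \<le> card V" using \<open>card Z = k\<close> finV by (metis card_mono)
  qed
  ultimately obtain k where "P k" "\<forall>k'. P k' \<longrightarrow> k' \<le> k"
    using Nat.ex_has_greatest_nat[of P 0 "card V"] by blast
  then show ?thesis unfolding P_def by metis
qed

lemma finA: "finite (A b)" using A_sub finN by (rule finite_subset)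

lemma Z_props:
  assumes b: "b \<in> V" and Z: "Z \<subseteq> A b" "indep Z" "\<forall>Z'. Z' \<subseteq> A b \<and> indep Z' \<longrightarrow> card Z' \<le> card Z"
  shows "\<And>x. x \<in> A b \<Longrightarrow> x \<notin> Z \<Longrightarrow> \<exists>z\<in>Z. adj H x z"
    and "\<And>x. x \<in> N b \<Longrightarrow> x \<notin> Z \<Longrightarrow> \<exists>y. adj H x y \<and> y \<in> W b \<union> Z"
proof -
  show mx: "\<exists>z\<in>Z. adj H x z" if x: "x \<in> A b" "x \<notin> Z" for x
  proof (rule ccontr)
    assume "\<not> ?thesis"
    then have "indep (insert x Z)" using Z(2) adjV[of x x] by (auto simp: indep_def adj_sym)
    moreover have "insert x Z \<subseteq> A b" using x Z(1) by blast
    ultimately have "card (insert x Z) \<le> card Z" using Z(3) by blast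
    moreover have "finite Z" using Z(1) finA by (rule finite_subset)
    ultimately show False using x(2) by simp
  qed
  show "\<exists>y. adj H x y \<and> y \<in> W b \<union> Z" if x: "x \<in> N b" "x \<notin> Z" for x
  proof (cases "x \<in> A b")
    case True then show ?thesis using mx[OF True x(2)] by blast
  next
    case False
    then obtain y where "adj H x y" "y \<notin> NC b" using x by (auto simp: A_def N_def)
    then show ?thesis using adjV[of x y] by (auto simp: W_def)
  qed
qed

lemma F1: assumes b: "b \<in> V" and e: "A b = {}" shows "card (N b) + 2 = m"
proof -
  obtain x0 where x0: "x0 \<in> N b" using has_nb[OF b] by blast
  have "card (N b) + 2 = m + card ({}::'a set)"
  proof (rule bZ[OF b _ _ _ x0])
    fix x assume "x \<in> N b" "x \<notin> {}"
    then have "x \<notin> A b" using e by blast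
    then obtain y where "adj H x y" "y \<notin> NC b" using \<open>x \<in> N b\<close> by (auto simp: A_def N_def)
    then show "\<exists>y. adj H x y \<and> y \<in> W b \<union> {}" using adjV[of x y] by (auto simp: W_def)
  qed auto
  then show ?thesis by simp
qed

end


context kh_wd begin

lemma card_NC_le: "b \<in> V \<Longrightarrow> card (NC b) \<le> card V"
  using NC_sub finV by (simp add: card_mono)

lemma star:
  assumes nc: "\<not> (\<forall>x\<in>V. \<forall>y\<in>V. x \<noteq> y \<longrightarrow> adj H x y)" and ex: "\<not> (m = 3 \<and> card V = 3)"
    and b: "b \<in> V" and Z: "Z \<subseteq> A b" "indep Z" and NZ: "N b \<subseteq> Z"
  shows False
proof -
  have ZN: "Z = N b" "A b = N b" using Z(1) NZ A_sub by auto
  have "V \<subseteq> NC b"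
  proof (rule closure[OF b])
    show "b \<in> NC b" by (simp add: NC_def)
    fix x y assume "x \<in> NC b" "adj H x y"
    then show "y \<in> NC b"
    proof (cases "x = b")
      case True then show ?thesis using \<open>adj H x y\<close> by (simp add: NC_def N_def)
    next
      case False
      then have "x \<in> A b" using \<open>x \<in> NC b\<close> ZN by (simp add: NC_def)
      then show ?thesis using \<open>adj H x y\<close> by (auto simp: A_def N_def)
    qed
  qed
  then have VNC: "V = NC b" using NC_sub[OF b] by blast
  have cV: "card V = Suc (card (N b))" using VNC card_NC by simp
  have dl: "card (N b) < m" using deg_lt[OF b] .
  have mV: "m \<le> card V" using n_ge_m .
  obtain l where l: "l \<in> N b" using has_nb[OF b] by blast
  have Nl: "N l = {b}"
  proof
    show "{b} \<subseteq> N l" using l adjV[of b l] by (simp add: inN)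
    show "N l \<subseteq> {b}"
    proof
      fix y assume y: "y \<in> N l"
      have "l \<in> A b" using l ZN by simp
      then have "y \<in> NC b" using y by (auto simp: A_def)
      moreover have "y \<notin> N b" using Z(2) ZN l y by (auto simp: indep_def inN)
      ultimately show "y \<in> {b}" by (simp add: NC_def)
    qed
  qed
  show False
  proof (cases "m = 2")
    case True
    then have "card (N b) = 1" using cV dl mV by simp
    then obtain l' where "N b = {l'}" by (metis card_1_singletonE)
    then have "V = {b, l}" using VNC l by (auto simp: NC_def)
    moreover have "adj H b l" using l by (simp add: inN)
    moreover have "adj H l b" using adjV[of b l] \<open>adj H b l\<close> by blast
    ultimately show False using nc by auto
  next
    case False
    then have "card (N b) \<ge> 2" using cV dl mV m2 by simp
    have "N b - {l} \<noteq> {}"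
    proof
      assume "N b - {l} = {}"
      then have "N b \<subseteq> {l}" by blast
      then have "card (N b) \<le> card {l}" by (intro card_mono) auto
      then show False using \<open>card (N b) \<ge> 2\<close> by simp
    qed
    then obtain l' where l': "l' \<in> N b" "l' \<noteq> l" by blast
    have lV: "l \<in> V" using l N_sub by blast
    have Al: "A l = {}"
    proof -
      have "l' \<notin> NC l" using l' Nl notinN[of b] by (auto simp: NC_def)
      then have "\<not> N b \<subseteq> NC l" using l' by blast
      then show ?thesis using Nl by (auto simp: A_def)
    qed
    have "card (N l) + 2 = m" using F1[OF lV Al] .
    then have "m = 3" using Nl by simp
    moreover have "card V = 3" using cV dl mV \<open>m = 3\<close> by simp
    ultimately show False using ex by simp
  qed
qed

lemma F3:
  assumes nc: "\<not> (\<forall>x\<in>V. \<forall>y\<in>V. x \<noteq> y \<longrightarrow> adj H x y)" and ex: "\<not> (m = 3 \<and> card V = 3)"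
    and b: "b \<in> V" and ne: "A b \<noteq> {}"
  shows "card (N b) + 1 = m"
    and "\<And>Z. Z \<subseteq> A b \<Longrightarrow> indep Z \<Longrightarrow> card Z \<le> 1"
proof -
  obtain Z where Z: "Z \<subseteq> A b" "indep Z" "\<forall>Z'. Z' \<subseteq> A b \<and> indep Z' \<longrightarrow> card Z' \<le> card Z"
    using maxZ[of b] by blast
  note P = Z_props[OF b Z]
  have Zne: "Z \<noteq> {}"
  proof
    assume "Z = {}"
    obtain x where "x \<in> A b" using ne by blast
    then show False using P(1)[of x] \<open>Z = {}\<close> by blast
  qed
  have "\<not> N b \<subseteq> Z" using star[OF nc ex b Z(1,2)] by blast
  then obtain x0 where x0: "x0 \<in> N b" "x0 \<notin> Z" by blast
  have eq: "card (N b) + 2 = m + card Z"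
    using bZ[OF b Z(1) _ P(2) x0] Z(2) by (auto simp: indep_def)
  have "finite Z" using Z(1) finA by (rule finite_subset)
  then have "card Z \<ge> 1" using Zne by (simp add: Suc_leI card_gt_0_iff)
  then show c: "card (N b) + 1 = m" using eq deg_lt[OF b] by linarith
  then have "card Z = 1" using eq by linarith
  then show "\<And>Z'. Z' \<subseteq> A b \<Longrightarrow> indep Z' \<Longrightarrow> card Z' \<le> 1" using Z(3) by metis
qed

lemma F4:
  assumes nc: "\<not> (\<forall>x\<in>V. \<forall>y\<in>V. x \<noteq> y \<longrightarrow> adj H x y)" and ex: "\<not> (m = 3 \<and> card V = 3)"
    and b: "b \<in> V" and VN: "V \<subseteq> NC b"
  shows False
proof -
  have AN: "A b = N b" using VN N_sub by (auto simp: A_def)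
  have ne: "A b \<noteq> {}" using AN has_nb[OF b] by simp
  obtain x y where xy: "x \<in> V" "y \<in> V" "x \<noteq> y" "\<not> adj H x y" using nc by blast
  have xb: "x \<noteq> b" using xy VN by (auto simp: NC_def N_def)
  have yb: "y \<noteq> b" using xy VN adjV[of y x] by (auto simp: NC_def N_def)
  from xb yb have "x \<in> A b" "y \<in> A b" using xy VN AN by (auto simp: NC_def)
  moreover have "indep {x,y}" using xy adjV[of x x] adjV[of y y] adjV[of y x] by (auto simp: indep_def)
  ultimately have "card {x,y} \<le> 1" using F3(2)[OF nc ex b ne, of "{x,y}"] by blast
  then show False using xy(3) by simp
qed

end


context kh_wd begin

lemma split_card:
  assumes hby: "adj H b y"
  shows "card V = card (V - (NC b \<union> NC y)) + card (N b \<union> N y)"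
    and "card (N b \<union> N y) + card (N b \<inter> N y) = card (N b) + card (N y)"
proof -
  have e: "NC b \<union> NC y = N b \<union> N y" using hby adjV[OF hby] by (auto simp: NC_def inN)
  have s: "N b \<union> N y \<subseteq> V" using N_sub by blast
  have f: "finite (N b \<union> N y)" using finN by simp
  show "card V = card (V - (NC b \<union> NC y)) + card (N b \<union> N y)"
    unfolding e using card_Diff_subset[OF f s] card_mono[OF finV s] by simp
  show "card (N b \<union> N y) + card (N b \<inter> N y) = card (N b) + card (N y)"
    using card_Un_Int[OF finN finN] by simp
qed

lemma main:
  assumes nc: "\<not> (\<forall>x\<in>V. \<forall>y\<in>V. x \<noteq> y \<longrightarrow> adj H x y)" and ex: "\<not> (m = 3 \<and> card V = 3)"
  shows False
proof (cases "\<exists>b\<in>V. A b \<noteq> {}")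
  case True
  then obtain b a where b: "b \<in> V" and a: "a \<in> A b" by blast
  have degb: "card (N b) + 1 = m" using F3(1)[OF nc ex b] a by blast
  have "\<not> N b \<subseteq> A b"
  proof
    assume NA: "N b \<subseteq> A b"
    have "V \<subseteq> NC b"
    proof (rule closure[OF b])
      show "b \<in> NC b" by (simp add: NC_def)
      fix x y assume "x \<in> NC b" "adj H x y"
      then show "y \<in> NC b"
      proof (cases "x = b")
        case True then show ?thesis using \<open>adj H x y\<close> by (simp add: NC_def N_def)
      next
        case False
        then have "x \<in> A b" using \<open>x \<in> NC b\<close> NA by (auto simp: NC_def)
        then show ?thesis using \<open>adj H x y\<close> by (auto simp: A_def N_def)
      qed
    qed
    then show False using F4[OF nc ex b] by blast
  qed
  then obtain y where y: "y \<in> N b" "y \<notin> A b" by blast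
  then obtain z where z: "adj H y z" "z \<notin> NC b" by (auto simp: A_def N_def)
  have hby: "adj H b y" using y by (simp add: inN)
  have yV: "y \<in> V" "y \<noteq> b" "adj H y b" using adjV[OF hby] by auto
  have degy: "card (N y) < m" using deg_lt[OF yV(1)] .
  have aN: "a \<in> N b" "N a \<subseteq> NC b" using a by (auto simp: A_def)
  have ay: "a \<noteq> y" using a y by blast
  note sc = split_card[OF hby]
  show False
  proof (cases "adj H a y")
    case False
    have "card (V - (NC b \<union> NC y)) + card {0..<m} + card {1..<m} \<le> card V"
    proof (rule edge[OF hby])
      fix i assume "i \<in> {0..<m}"
      show "\<exists>x. adj H b x \<and> x \<notin> NC y \<and> (i = 0 \<longrightarrow> (\<forall>w. adj H x w \<longrightarrow> w \<in> NC b \<union> NC y))"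
      proof (intro exI[of _ a] conjI impI allI)
        show "adj H b a" using aN by (simp add: inN)
        show "a \<notin> NC y" using ay False adjV[of y a] by (auto simp: NC_def inN)
        fix w assume "adj H a w" then show "w \<in> NC b \<union> NC y" using aN by (auto simp: inN)
      qed
    next
      fix i assume "i \<in> {1..<m}"
      then show "\<exists>x. adj H y x \<and> x \<notin> NC b \<and> (i = 0 \<longrightarrow> (\<forall>w. adj H x w \<longrightarrow> w \<in> NC b \<union> NC y))"
        using z by auto
    qed auto
    then have "card (V - (NC b \<union> NC y)) + m + (m - 1) \<le> card V" by simp
    then show False using sc degb degy by linarith
  next
    case ayT: True
    show False
    proof (cases "\<exists>x. x \<in> N b \<and> x \<noteq> y \<and> \<not> adj H x y")
      case True
      then obtain x where x: "x \<in> N b" "x \<noteq> y" "\<not> adj H x y" by blast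
      have "card (V - (NC b \<union> NC y)) + card {1..<m} + card {1..<m} \<le> card V"
      proof (rule edge[OF hby])
        fix i assume "i \<in> {1..<m}"
        show "\<exists>x. adj H b x \<and> x \<notin> NC y \<and> (i = 0 \<longrightarrow> (\<forall>w. adj H x w \<longrightarrow> w \<in> NC b \<union> NC y))"
        proof (intro exI[of _ x] conjI impI allI)
          show "adj H b x" using x by (simp add: inN)
          show "x \<notin> NC y" using x adjV[of y x] by (auto simp: NC_def inN)
          show "w \<in> NC b \<union> NC y" if "i = 0" for w using that \<open>i \<in> {1..<m}\<close> by simp
        qed
      next
        fix i assume "i \<in> {1..<m}"
        then show "\<exists>x. adj H y x \<and> x \<notin> NC b \<and> (i = 0 \<longrightarrow> (\<forall>w. adj H x w \<longrightarrow> w \<in> NC b \<union> NC y))"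
          using z by auto
      qed auto
      then have c: "card (V - (NC b \<union> NC y)) + (m - 1) + (m - 1) \<le> card V" by simp
      have "a \<in> N b \<inter> N y" using aN ayT adjV[of a y] by (auto simp: inN)
      then have "card (N b \<inter> N y) \<ge> 1"
        using finN by (metis One_nat_def Suc_leI card_gt_0_iff empty_iff finite_Int)
      then show False using c sc degb degy by linarith
    next
      case False
      then have all: "\<And>x. x \<in> N b \<Longrightarrow> x \<noteq> y \<Longrightarrow> adj H y x" using adjV by blast
      have sub: "insert b (insert z (N b - {y})) \<subseteq> N y"
      proof
        fix w assume w: "w \<in> insert b (insert z (N b - {y}))"
        show "w \<in> N y"
        proof (cases "w = b \<or> w = z")
          case True then show ?thesis using yV z by (auto simp: inN)
        next
          case False then have "w \<in> N b" "w \<noteq> y" using w by auto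
          then show ?thesis using all by (simp add: inN)
        qed
      qed
      have zb: "z \<noteq> b" "z \<notin> N b" using z by (auto simp: NC_def)
      have "card (insert b (insert z (N b - {y}))) = Suc (Suc (card (N b - {y})))"
        using zb notinN[of b] finN by simp
      also have "card (N b - {y}) = card (N b) - 1" using y finN by simp
      finally have "card (insert b (insert z (N b - {y}))) = card (N b) + 1" using degb m2 by simp
      moreover have "card (insert b (insert z (N b - {y}))) \<le> card (N y)"
        using sub finN by (rule card_mono[rotated])
      ultimately show False using degb degy by linarith
    qed
  qed
next
  case False
  then have Ae: "\<And>b. b \<in> V \<Longrightarrow> A b = {}" by blast
  obtain b where b: "b \<in> V" using n2 by (metis all_not_in_conv card.empty not_numeral_le_zero)
  obtain y where y: "y \<in> N b" using has_nb[OF b] by blast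
  have hby: "adj H b y" using y by (simp add: inN)
  have yV: "y \<in> V" "adj H y b" using adjV[OF hby] by auto
  have db: "card (N b) + 2 = m" using F1[OF b Ae[OF b]] .
  have dy: "card (N y) + 2 = m" using F1[OF yV(1) Ae[OF yV(1)]] .
  have "y \<notin> A b" using Ae[OF b] by blast
  then obtain z where z: "adj H y z" "z \<notin> NC b" using y by (auto simp: A_def N_def)
  have "b \<notin> A y" using Ae[OF yV(1)] by blast
  moreover have "b \<in> N y" using yV by (simp add: inN)
  ultimately obtain x where x: "adj H b x" "x \<notin> NC y" by (auto simp: A_def N_def)
  have "card (V - (NC b \<union> NC y)) + card {1..<m} + card {1..<m} \<le> card V"
  proof (rule edge[OF hby])
    fix i assume "i \<in> {1..<m}"
    then show "\<exists>x. adj H b x \<and> x \<notin> NC y \<and> (i = 0 \<longrightarrow> (\<forall>w. adj H x w \<longrightarrow> w \<in> NC b \<union> NC y))"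
      using x by auto
  next
    fix i assume "i \<in> {1..<m}"
    then show "\<exists>x. adj H y x \<and> x \<notin> NC b \<and> (i = 0 \<longrightarrow> (\<forall>w. adj H x w \<longrightarrow> w \<in> NC b \<union> NC y))"
      using z by auto
  qed auto
  then have "card (V - (NC b \<union> NC y)) + (m - 1) + (m - 1) \<le> card V" by simp
  then show False using split_card[OF hby] db dy by linarith
qed

end


lemma dom_transfer:
  assumes bij: "bij_betw \<phi> (verts G) (verts G')"
    and adj: "\<And>x y. x \<in> verts G \<Longrightarrow> y \<in> verts G \<Longrightarrow> adj G x y \<longleftrightarrow> adj G' (\<phi> x) (\<phi> y)"
    and D: "D \<subseteq> verts G"
  shows "dominating G D \<longleftrightarrow> dominating G' (\<phi> ` D)"
proof
  assume d: "dominating G D"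
  show "dominating G' (\<phi> ` D)"
    unfolding dominating_def
  proof (intro conjI ballI)
    show "\<phi> ` D \<subseteq> verts G'" using D bij by (auto simp: bij_betw_def)
    fix v' assume "v' \<in> verts G'"
    then obtain v where v: "v \<in> verts G" "v' = \<phi> v" using bij by (auto simp: bij_betw_def)
    then have "v \<in> D \<or> (\<exists>u\<in>D. adj G v u)" using d by (auto simp: dominating_def)
    then show "v' \<in> \<phi> ` D \<or> (\<exists>u\<in>\<phi> ` D. adj G' v' u)" using v adj D by blast
  qed
next
  assume d: "dominating G' (\<phi> ` D)"
  show "dominating G D"
    unfolding dominating_def
  proof (intro conjI ballI)
    show "D \<subseteq> verts G" by fact
    fix v assume v: "v \<in> verts G"
    then have "\<phi> v \<in> verts G'" using bij by (auto simp: bij_betw_def)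
    then have "\<phi> v \<in> \<phi> ` D \<or> (\<exists>u\<in>\<phi> ` D. adj G' (\<phi> v) u)" using d by (auto simp: dominating_def)
    moreover have "\<phi> v \<in> \<phi> ` D \<Longrightarrow> v \<in> D"
      using bij v D by (auto simp: bij_betw_def inj_on_def)
    ultimately show "v \<in> D \<or> (\<exists>u\<in>D. adj G v u)" using adj v D by blast
  qed
qed

lemma wd_transfer:
  assumes bij: "bij_betw \<phi> (verts G) (verts G')"
    and adj: "\<And>x y. x \<in> verts G \<Longrightarrow> y \<in> verts G \<Longrightarrow> adj G x y \<longleftrightarrow> adj G' (\<phi> x) (\<phi> y)"
    and wd: "well_dominated G'"
  shows "well_dominated G"
  unfolding well_dominated_def
proof (intro allI impI)
  fix D assume mD: "minimal_dominating G D"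
  then have dD: "dominating G D" and DV: "D \<subseteq> verts G" by (auto simp: minimal_dominating_def dominating_def)
  have inj: "inj_on \<phi> (verts G)" using bij by (simp add: bij_betw_def)
  have "minimal_dominating G' (\<phi> ` D)"
    unfolding minimal_dominating_def
  proof (intro conjI allI impI notI)
    show "dominating G' (\<phi> ` D)" using dom_transfer[OF bij adj DV] dD by blast
    fix D' assume D': "D' \<subset> \<phi> ` D" "dominating G' D'"
    define D'' where "D'' = {x \<in> D. \<phi> x \<in> D'}"
    have im: "\<phi> ` D'' = D'" using D'(1) by (auto simp: D''_def)
    have sub: "D'' \<subset> D" using D'(1) im by (auto simp: D''_def)
    have "D'' \<subseteq> verts G" using sub DV by blast
    then have "dominating G D''" using dom_transfer[OF bij adj] D'(2) im by blast
    then show False using mD sub by (auto simp: minimal_dominating_def)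
  qed
  then have mm: "minimum_dominating G' (\<phi> ` D)" using wd by (simp add: well_dominated_def)
  show "minimum_dominating G D"
    unfolding minimum_dominating_def
  proof (intro conjI allI impI)
    show "dominating G D" by fact
    fix D2 assume d2: "dominating G D2"
    then have D2V: "D2 \<subseteq> verts G" by (simp add: dominating_def)
    have "dominating G' (\<phi> ` D2)" using dom_transfer[OF bij adj D2V] d2 by blast
    then have "card (\<phi> ` D) \<le> card (\<phi> ` D2)" using mm by (simp add: minimum_dominating_def)
    moreover have "card (\<phi> ` D) = card D" using inj DV by (metis card_image inj_on_subset)
    moreover have "card (\<phi> ` D2) = card D2" using inj D2V by (metis card_image inj_on_subset)
    ultimately show "card D \<le> card D2" by simp
  qed
qed

lemma wd_iso_cp:
  assumes iso: "graph_iso H K" and wd: "well_dominated (cart_prod (complete_graph m) K)"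
  shows "well_dominated (cart_prod (complete_graph m) H)"
proof -
  obtain f where f: "bij_betw f (verts H) (verts K)"
    and fa: "\<And>x y. x \<in> verts H \<Longrightarrow> y \<in> verts H \<Longrightarrow> adj H x y \<longleftrightarrow> adj K (f x) (f y)"
    using iso by (auto simp: graph_iso_def)
  have bij: "bij_betw (map_prod id f) (verts (cart_prod (complete_graph m) H)) (verts (cart_prod (complete_graph m) K))"
    unfolding verts_cp by (rule bij_betw_map_prod[OF bij_betw_id f])
  have inj: "inj_on f (verts H)" using f by (simp add: bij_betw_def)
  show ?thesis
  proof (rule wd_transfer[OF bij _ wd])
    fix x y assume x: "x \<in> verts (cart_prod (complete_graph m) H)" and y: "y \<in> verts (cart_prod (complete_graph m) H)"
    obtain i h where xi: "x = (i,h)" "i < m" "h \<in> verts H" using x by (auto simp: verts_cp verts_K)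
    obtain j k where yj: "y = (j,k)" "j < m" "k \<in> verts H" using y by (auto simp: verts_cp verts_K)
    have fh: "f h \<in> verts K" using f xi by (auto simp: bij_betw_def)
    have eq: "f h = f k \<longleftrightarrow> h = k" using inj xi yj by (auto simp: inj_on_def)
    show "adj (cart_prod (complete_graph m) H) x y \<longleftrightarrow> adj (cart_prod (complete_graph m) K) (map_prod id f x) (map_prod id f y)"
      using xi yj fh eq fa[OF xi(3) yj(3)] by (auto simp: adj_cp verts_K)
  qed
qed

lemma wd_of_const:
  assumes fin: "finite (verts G)" and c: "\<And>D. minimal_dominating G D \<Longrightarrow> card D = k"
  shows "well_dominated G"
  unfolding well_dominated_def minimum_dominating_def
proof (intro allI impI conjI)
  fix D assume mD: "minimal_dominating G D"
  show "dominating G D" using mD by (simp add: minimal_dominating_def)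
next
  fix D D2 assume mD: "minimal_dominating G D" and d2: "dominating G D2"
  obtain D3 where D3: "D3 \<subseteq> D2" "minimal_dominating G D3" using exists_minimal[OF fin d2] by blast
  have "finite D2" using d2 fin by (auto simp: dominating_def intro: finite_subset)
  then have "card D3 \<le> card D2" using D3(1) by (rule card_mono)
  then show "card D \<le> card D2" using c[OF mD] c[OF D3(2)] by simp
qed

lemma fiber_lemma:
  fixes H :: "'a graph"
  assumes mD: "minimal_dominating (cart_prod (complete_graph m) H) D"
    and meets: "\<And>h. h \<in> verts H \<Longrightarrow> \<exists>i. (i,h) \<in> D"
  shows "card D = card (verts H)"
proof -
  let ?G = "cart_prod (complete_graph m) H"
  have dD: "dominating ?G D" using mD by (simp add: minimal_dominating_def)
  have DV: "D \<subseteq> {0..<m} \<times> verts H" using dD by (simp add: dominating_def verts_cp verts_K)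
  have inj: "inj_on snd D"
  proof (rule inj_onI, rule ccontr)
    fix x y assume x: "x \<in> D" and y: "y \<in> D" and s: "snd x = snd y" and ne: "x \<noteq> y"
    obtain r h where xr: "x = (r,h)" by (cases x)
    obtain s' where ys: "y = (s',h)" using s xr by (cases y) auto
    have rs: "r \<noteq> s'" using ne xr ys by simp
    have "dominating ?G (D - {x})"
      unfolding dominating_def
    proof (intro conjI ballI)
      show "D - {x} \<subseteq> verts ?G" using dD by (auto simp: dominating_def)
      fix v assume v: "v \<in> verts ?G"
      obtain t c where vt: "v = (t,c)" "t < m" "c \<in> verts H" using v by (auto simp: verts_cp verts_K)
      show "v \<in> D - {x} \<or> (\<exists>u\<in>D - {x}. adj ?G v u)"
      proof (cases "c = h")
        case True
        have "y \<in> D - {x}" using y ne by simp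
        moreover have "v = y \<or> adj ?G v y" using vt True ys DV y by (auto simp: adj_cp adj_K verts_K)
        ultimately show ?thesis by blast
      next
        case False
        obtain e where e: "(e,c) \<in> D" using meets[OF vt(3)] by blast
        have "(e,c) \<in> D - {x}" using e False xr by simp
        moreover have "v = (e,c) \<or> adj ?G v (e,c)" using vt e DV by (auto simp: adj_cp adj_K verts_K)
        ultimately show ?thesis by blast
      qed
    qed
    moreover have "D - {x} \<subset> D" using x by blast
    ultimately show False using mD by (simp add: minimal_dominating_def)
  qed
  have "snd ` D = verts H" using DV meets by force
  then show ?thesis using card_image[OF inj] by simp
qed

lemma layer_lemma:
  fixes H :: "'a graph"
  assumes mD: "minimal_dominating (cart_prod (complete_graph m) H) D"
    and comp: "\<And>x y. x \<in> verts H \<Longrightarrow> y \<in> verts H \<Longrightarrow> x \<noteq> y \<Longrightarrow> adj H x y"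
    and meets: "\<And>i. i < m \<Longrightarrow> \<exists>h. (i,h) \<in> D"
  shows "card D = m"
proof -
  let ?G = "cart_prod (complete_graph m) H"
  have dD: "dominating ?G D" using mD by (simp add: minimal_dominating_def)
  have DV: "D \<subseteq> {0..<m} \<times> verts H" using dD by (simp add: dominating_def verts_cp verts_K)
  have inj: "inj_on fst D"
  proof (rule inj_onI, rule ccontr)
    fix x y assume x: "x \<in> D" and y: "y \<in> D" and s: "fst x = fst y" and ne: "x \<noteq> y"
    obtain i a where xr: "x = (i,a)" by (cases x)
    obtain b where ys: "y = (i,b)" using s xr by (cases y) auto
    have "dominating ?G (D - {x})"
      unfolding dominating_def
    proof (intro conjI ballI)
      show "D - {x} \<subseteq> verts ?G" using dD by (auto simp: dominating_def)
      fix v assume v: "v \<in> verts ?G"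
      obtain t c where vt: "v = (t,c)" "t < m" "c \<in> verts H" using v by (auto simp: verts_cp verts_K)
      show "v \<in> D - {x} \<or> (\<exists>u\<in>D - {x}. adj ?G v u)"
      proof (cases "t = i")
        case True
        have "y \<in> D - {x}" using y ne by simp
        moreover have "v = y \<or> adj ?G v y" using vt True ys DV y comp[of c b] by (auto simp: adj_cp verts_K)
        ultimately show ?thesis by blast
      next
        case False
        obtain e where e: "(t,e) \<in> D" using meets[OF vt(2)] by blast
        have "(t,e) \<in> D - {x}" using e False xr by simp
        moreover have "v = (t,e) \<or> adj ?G v (t,e)" using vt e DV comp[of c e] by (auto simp: adj_cp verts_K)
        ultimately show ?thesis by blast
      qed
    qed
    moreover have "D - {x} \<subset> D" using x by blast
    ultimately show False using mD by (simp add: minimal_dominating_def)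
  qed
  have "fst ` D = {0..<m}" using DV meets by force
  then show ?thesis using card_image[OF inj] by simp
qed

lemma wd_KK: "well_dominated (cart_prod (complete_graph m) (complete_graph m))"
proof (rule wd_of_const)
  show "finite (verts (cart_prod (complete_graph m) (complete_graph m)))" by (simp add: verts_cp verts_K)
  fix D assume mD: "minimal_dominating (cart_prod (complete_graph m) (complete_graph m)) D"
  have comp: "\<And>x y. x \<in> verts (complete_graph m) \<Longrightarrow> y \<in> verts (complete_graph m) \<Longrightarrow> x \<noteq> y \<Longrightarrow> adj (complete_graph m) x y"
    by (simp add: verts_K adj_K)
  show "card D = m"
  proof (cases "\<forall>h\<in>verts (complete_graph m). \<exists>i. (i,h) \<in> D")
    case True
    then show ?thesis using fiber_lemma[OF mD] by (simp add: verts_K)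
  next
    case False
    then obtain h where h: "h < m" "\<And>i. (i,h) \<notin> D" by (auto simp: verts_K)
    show ?thesis
    proof (rule layer_lemma[OF mD comp])
      fix i assume i: "i < m"
      show "\<exists>k. (i,k) \<in> D"
      proof (rule ccontr)
        assume nk: "\<not> ?thesis"
        have "(i,h) \<in> verts (cart_prod (complete_graph m) (complete_graph m))" using i h by (simp add: verts_cp verts_K)
        then have "(i,h) \<in> D \<or> (\<exists>u\<in>D. adj (cart_prod (complete_graph m) (complete_graph m)) (i,h) u)"
          using mD by (auto simp: minimal_dominating_def dominating_def)
        then obtain u where "u \<in> D" "adj (cart_prod (complete_graph m) (complete_graph m)) (i,h) u" using h by blast
        then show False using nk h by (cases u) (auto simp: adj_cp)
      qed
    qed
  qed
qed



abbreviation "GP \<equiv> cart_prod (complete_graph 3) (path_graph 3)"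

lemma vGP: "verts GP = {0..<3} \<times> {0..<3}" by (simp add: verts_cp verts_K verts_P)
lemma aGP: "adj GP (i,h) (j,k) \<longleftrightarrow> (i = j \<and> i < 3 \<and> h < 3 \<and> k < 3 \<and> (h = k + 1 \<or> k = h + 1))
   \<or> (h = k \<and> h < 3 \<and> i < 3 \<and> j < 3 \<and> i \<noteq> j)"
  by (auto simp: adj_cp adj_K adj_P verts_K verts_P)

lemma lt3: "(x::nat) < 3 \<longleftrightarrow> x = 0 \<or> x = 1 \<or> x = 2" by auto

lemma domGP: "dominating GP D \<Longrightarrow> v \<in> verts GP \<Longrightarrow> v \<in> D \<or> (\<exists>u\<in>D. adj GP v u)"
  by (simp add: dominating_def)

lemma wd_K3P3: "well_dominated GP"
proof (rule wd_of_const[where k=3])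
  show "finite (verts GP)" by (simp add: vGP)
  fix D assume mD: "minimal_dominating GP D"
  have dD: "dominating GP D" using mD by (simp add: minimal_dominating_def)
  have DV: "D \<subseteq> {0..<3} \<times> {0..<3}" using dD by (simp add: dominating_def vGP)
  have notmin: "\<not> dominating GP D'" if "D' \<subset> D" for D' using mD that by (simp add: minimal_dominating_def)
  have dom: "\<exists>u\<in>D. u = (i,h) \<or> adj GP (i,h) u" if "i < 3" "h < 3" for i h
    using domGP[OF dD, of "(i,h)"] that by (auto simp: vGP)
  show "card D = 3"
  proof (cases "\<forall>h\<in>verts (path_graph 3). \<exists>i. (i,h) \<in> D")
    case True
    then show ?thesis using fiber_lemma[OF mD] by (simp add: verts_P)
  next
    case False
    then obtain h where h: "h < 3" "\<And>i. (i,h) \<notin> D" by (auto simp: verts_P)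
    show ?thesis
    proof (cases "h = 1")
      case False
      then have hh: "h = 0 \<or> h = 2" using h(1) by auto
      have F1: "{0..<3} \<times> {1} \<subseteq> D"
      proof clarify
        fix i :: nat assume i: "i \<in> {0..<3}"
        obtain u where u: "u \<in> D" "u = (i,h) \<or> adj GP (i,h) u" using dom[of i h] i h by auto
        obtain j k where jk: "u = (j,k)" by (cases u)
        have "k \<noteq> h" using u(1) jk h(2) by blast
        then show "(i,1) \<in> D" using u jk hh by (auto simp: aGP)
      qed
      have dF: "dominating GP ({0..<3} \<times> {1})"
        unfolding dominating_def
      proof (intro conjI ballI)
        show "{0..<3} \<times> {1} \<subseteq> verts GP" by (auto simp: vGP)
        fix v assume "v \<in> verts GP"
        then obtain t c where v: "v = (t,c)" "t < 3" "c < 3" by (auto simp: vGP)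
        then have "v = (t,1) \<or> adj GP v (t,1)" by (auto simp: aGP)
        then show "v \<in> {0..<3} \<times> {1} \<or> (\<exists>u\<in>{0..<3} \<times> {1}. adj GP v u)" using v by auto
      qed
      have "D = {0..<3} \<times> {1}" using F1 notmin[of "{0..<3} \<times> {1}"] dF by blast
      then show ?thesis by simp
    next
      case True
      then have no1: "\<And>i. (i,1) \<notin> D" using h by simp
      have cov: "(i,0) \<in> D \<or> (i,2) \<in> D" if i: "i < 3" for i
      proof -
        obtain u where u: "u \<in> D" "u = (i,1) \<or> adj GP (i,1) u" using dom[of i 1] i by auto
        obtain j k where jk: "u = (j,k)" by (cases u)
        have "k \<noteq> 1" using u(1) jk no1 by blast
        then show ?thesis using u jk by (auto simp: aGP numeral_2_eq_2)
      qed
      have inj: "inj_on fst D"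
      proof (rule inj_onI, rule ccontr)
        fix x y assume x: "x \<in> D" and y: "y \<in> D" and s: "fst x = fst y" and ne: "x \<noteq> y"
        obtain i a where xr: "x = (i,a)" by (cases x)
        obtain b where ys: "y = (i,b)" using s xr by (cases y) auto
        have ab: "a < 3" "b < 3" "a \<noteq> 1" "b \<noteq> 1" "a \<noteq> b" "i < 3"
          using x y xr ys DV no1 ne by auto
        then have both: "(i,0) \<in> D" "(i,2) \<in> D" using x y xr ys by (auto simp: lt3)
        have c0: "j = i" if j: "(j,0) \<in> D" for j
        proof (rule ccontr)
          assume ji: "j \<noteq> i"
          have "dominating GP (D - {(i,0)})"
            unfolding dominating_def
          proof (intro conjI ballI)
            show "D - {(i,0)} \<subseteq> verts GP" using DV by (auto simp: vGP)
            fix v assume "v \<in> verts GP"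
            then obtain t c where v: "v = (t,c)" "t < 3" "c < 3" by (auto simp: vGP)
            have jl: "j < 3" using j DV by auto
            show "v \<in> D - {(i,0)} \<or> (\<exists>u\<in>D - {(i,0)}. adj GP v u)"
            proof -
              consider "c = 0" | "c = 1" | "c = 2" using v(3) by (auto simp: lt3)
              then show ?thesis
              proof cases
                case 1
                have "(j,0) \<in> D - {(i,0)}" using j ji by simp
                moreover have "v = (j,0) \<or> adj GP v (j,0)" using v 1 jl by (auto simp: aGP)
                ultimately show ?thesis by auto
              next
                case 2
                show ?thesis
                proof (cases "t = i")
                  case True
                  have "(i,2) \<in> D - {(i,0)}" using both by simp
                  moreover have "adj GP v (i,2)" using v 2 True by (simp add: aGP)
                  ultimately show ?thesis by auto
                next
                  case False
                  then have "(t,0) \<in> D - {(i,0)} \<or> (t,2) \<in> D - {(i,0)}" using cov[OF v(2)] by auto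
                  moreover have "adj GP v (t,0)" "adj GP v (t,2)" using v 2 by (auto simp: aGP)
                  ultimately show ?thesis by auto
                qed
              next
                case 3
                have "(i,2) \<in> D - {(i,0)}" using both by simp
                moreover have "v = (i,2) \<or> adj GP v (i,2)" using v 3 ab by (auto simp: aGP)
                ultimately show ?thesis by auto
              qed
            qed
          qed
          moreover have "D - {(i,0)} \<subset> D" using both by blast
          ultimately show False using notmin by blast
        qed
        have c2: "j = i" if j: "(j,2) \<in> D" for j
        proof (rule ccontr)
          assume ji: "j \<noteq> i"
          have "dominating GP (D - {(i,2)})"
            unfolding dominating_def
          proof (intro conjI ballI)
            show "D - {(i,2)} \<subseteq> verts GP" using DV by (auto simp: vGP)
            fix v assume "v \<in> verts GP"
            then obtain t c where v: "v = (t,c)" "t < 3" "c < 3" by (auto simp: vGP)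
            have jl: "j < 3" using j DV by auto
            show "v \<in> D - {(i,2)} \<or> (\<exists>u\<in>D - {(i,2)}. adj GP v u)"
            proof -
              consider "c = 0" | "c = 1" | "c = 2" using v(3) by (auto simp: lt3)
              then show ?thesis
              proof cases
                case 3
                have "(j,2) \<in> D - {(i,2)}" using j ji by simp
                moreover have "v = (j,2) \<or> adj GP v (j,2)" using v 3 jl by (auto simp: aGP)
                ultimately show ?thesis by auto
              next
                case 2
                show ?thesis
                proof (cases "t = i")
                  case True
                  have "(i,0) \<in> D - {(i,2)}" using both by simp
                  moreover have "adj GP v (i,0)" using v 2 True by (simp add: aGP)
                  ultimately show ?thesis by auto
                next
                  case False
                  then have "(t,0) \<in> D - {(i,2)} \<or> (t,2) \<in> D - {(i,2)}" using cov[OF v(2)] by auto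
                  moreover have "adj GP v (t,0)" "adj GP v (t,2)" using v 2 by (auto simp: aGP)
                  ultimately show ?thesis by auto
                qed
              next
                case 1
                have "(i,0) \<in> D - {(i,2)}" using both by simp
                moreover have "v = (i,0) \<or> adj GP v (i,0)" using v 1 ab by (auto simp: aGP)
                ultimately show ?thesis by auto
              qed
            qed
          qed
          moreover have "D - {(i,2)} \<subset> D" using both by blast
          ultimately show False using notmin by blast
        qed
        obtain k :: nat where k: "k < 3" "k \<noteq> i" using ab(6) by (metis lt3 zero_neq_one)
        show False using cov[OF k(1)] c0 c2 k(2) by blast
      qed
      have "fst ` D = {0..<3}"
      proof
        show "fst ` D \<subseteq> {0..<3}" using DV by auto
        show "{0..<3} \<subseteq> fst ` D"
        proof
          fix i assume "i \<in> {0..<(3::nat)}"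
          then have "(i,0) \<in> D \<or> (i,2) \<in> D" using cov by simp
          then show "i \<in> fst ` D" by force
        qed
      qed
      then show ?thesis using card_image[OF inj] by simp
    qed
  qed
qed



lemma iso_complete:
  assumes fsg: "fin_simple_graph H" and comp: "\<forall>x\<in>verts H. \<forall>y\<in>verts H. x \<noteq> y \<longrightarrow> adj H x y"
    and c: "card (verts H) = m"
  shows "graph_iso H (complete_graph m)"
proof -
  have fin: "finite (verts H)" using fsg by (simp add: fin_simple_graph_def)
  obtain f where f: "bij_betw f (verts H) {0..<m}" using ex_bij_betw_finite_nat[OF fin] c by blast
  have irr: "\<not> adj H x x" for x using fsg by (auto simp: fin_simple_graph_def)
  show ?thesis
    unfolding graph_iso_def
  proof (intro exI[of _ f] conjI ballI)
    show "bij_betw f (verts H) (verts (complete_graph m))" using f by (simp add: verts_K)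
    fix x y assume x: "x \<in> verts H" and y: "y \<in> verts H"
    have "f x < m" "f y < m" using f x y by (auto simp: bij_betw_def)
    moreover have "f x = f y \<longleftrightarrow> x = y" using f x y by (auto simp: bij_betw_def inj_on_def)
    ultimately show "adj H x y \<longleftrightarrow> adj (complete_graph m) (f x) (f y)"
      using comp x y irr by (auto simp: adj_K)
  qed
qed

context kh begin

lemma iso_P3:
  assumes c3: "card V = 3" and nc: "\<not> (\<forall>x\<in>V. \<forall>y\<in>V. x \<noteq> y \<longrightarrow> adj H x y)"
  shows "graph_iso H (path_graph 3)"
proof -
  obtain x y where xy: "x \<in> V" "y \<in> V" "x \<noteq> y" "\<not> adj H x y" using nc by blast
  have "card (V - {x,y}) = 1" using c3 xy finV by (simp add: card_Diff_subset)
  then obtain c where c: "V - {x,y} = {c}" by (metis card_1_singletonE)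
  then have Vc: "V = {x,y,c}" "c \<noteq> x" "c \<noteq> y" using xy by auto
  have nyx: "\<not> adj H y x" using xy adjV by blast
  obtain u where u: "adj H x u" using has_nb[OF xy(1)] by (auto simp: N_def)
  have "u \<in> V" "u \<noteq> x" using adjV[OF u] by auto
  then have "u = c" using u xy Vc by auto
  then have xc: "adj H x c" "adj H c x" using u adjV by auto
  obtain w where w: "adj H y w" using has_nb[OF xy(2)] by (auto simp: N_def)
  have "w \<in> V" "w \<noteq> y" using adjV[OF w] by auto
  then have "w = c" using w xy nyx Vc by auto
  then have yc: "adj H y c" "adj H c y" using w adjV by auto
  have irr: "\<not> adj H v v" for v using adjV by blast
  define f where "f v = (if v = x then 0 else if v = c then 1 else (2::nat))" for v
  show ?thesis
    unfolding graph_iso_def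
  proof (intro exI[of _ f] conjI ballI)
    have fx: "f x = 0" "f c = 1" "f y = 2" using Vc xy(3) by (auto simp: f_def)
    have inj: "inj_on f {x,y,c}" using fx xy(3) Vc(2,3) by (auto simp: inj_on_def)
    have im: "f ` {x,y,c} = {0..<3}" using fx by (auto simp: lt3)
    show "bij_betw f V (verts (path_graph 3))"
      unfolding bij_betw_def verts_P using inj im Vc(1) by simp
    fix a b assume a: "a \<in> V" and b: "b \<in> V"
    have a3: "a = x \<or> a = y \<or> a = c" and b3: "b = x \<or> b = y \<or> b = c" using a b Vc(1) by auto
    show "adj H a b \<longleftrightarrow> adj (path_graph 3) (f a) (f b)"
      using a3 b3 fx xy(4) nyx xc yc irr by (auto simp: adj_P)
  qed
qed

end

theorem theorem3:
  fixes m :: nat and H :: "'a graph"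
  assumes "m \<ge> 2"
    and "fin_simple_graph H" and "connected_graph H" and "card (verts H) \<ge> 2"
  shows "well_dominated (cart_prod (complete_graph m) H) \<longleftrightarrow>
    ((m \<noteq> 3 \<and> graph_iso H (complete_graph m)) \<or>
     (m = 3 \<and> (graph_iso H (complete_graph 3) \<or> graph_iso H (path_graph 3))))"
proof -
  interpret kh m H using assms by unfold_locales
  show ?thesis
  proof
    assume wd: "well_dominated (cart_prod (complete_graph m) H)"
    interpret kh_wd m H by unfold_locales (rule wd)
    show "(m \<noteq> 3 \<and> graph_iso H (complete_graph m)) \<or>
     (m = 3 \<and> (graph_iso H (complete_graph 3) \<or> graph_iso H (path_graph 3)))"
    proof (cases "\<forall>x\<in>V. \<forall>y\<in>V. x \<noteq> y \<longrightarrow> adj H x y")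
      case True
      obtain x where x: "x \<in> V" using has_nb n2 by (metis all_not_in_conv card.empty not_numeral_le_zero)
      have "N x = V - {x}"
      proof
        show "N x \<subseteq> V - {x}" using adjV[of x] by (auto simp: N_def)
        show "V - {x} \<subseteq> N x" using True x by (auto simp: N_def)
      qed
      then have "card (N x) = card V - 1" using x finV by simp
      then have "card V \<le> m" using deg_lt[OF x] by simp
      then have "card V = m" using n_ge_m by simp
      then have iso: "graph_iso H (complete_graph m)" using iso_complete[OF fsg True] by simp
      then show ?thesis by auto
    next
      case False
      show ?thesis
      proof (cases "m = 3 \<and> card V = 3")
        case True
        then show ?thesis using iso_P3 False by simp
      next
        case ex: False
        show ?thesis using main[OF False ex] by simp
      qed
    qed
  next
    assume r: "(m \<noteq> 3 \<and> graph_iso H (complete_graph m)) \<or>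
     (m = 3 \<and> (graph_iso H (complete_graph 3) \<or> graph_iso H (path_graph 3)))"
    show "well_dominated (cart_prod (complete_graph m) H)"
    proof (cases "graph_iso H (complete_graph m)")
      case True
      then show ?thesis using wd_iso_cp wd_KK by blast
    next
      case False
      then have "m = 3" "graph_iso H (path_graph 3)" using r by auto
      then show ?thesis using wd_iso_cp[of H "path_graph 3" 3] wd_K3P3 by simp
    qed
  qed
qed

end
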